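(* Let $M\subseteq Q_q^n$ ($n\ge 2$) be an MDS code with $\overline{0}\in M$, and let $G$ be a subgroup of $\mathrm{Ist}(M)$ acting transitively on $M$ such that for all $\overline\tau=(\tau_1,\dots,\tau_n),\overline\pi=(\pi_1,\dots,\pi_n)\in G$, the equality $\overline\tau(\overline{0})=\overline\pi(\overline{0})$ implies $\tau_1=\pi_1$. Then $G$ acts regularly on $M$ (in particular $|G|=|M|$), so $M$ is topolinear with regular group $G$.
   Context: $Q_q$ is a finite set of size $q$ containing $0$; $Q_q^n$ is the Hamming space of $n$-tuples, $\overline 0$ the all-zero tuple. An MDS code (with code distance 2) of length $n$ is a set $M\subseteq Q_q^n$ with $|M|=q^{n-1}$ and any two distinct elements at Hamming distance at least 2. An isotopism is a map $\overline{x}\mapsto(\tau_1x_1,\dots,\tau_nx_n)$ with $\tau_i$ permutations of $Q_q$; $\mathrm{Ist}(M)$ is the group of isotopisms mapping $M$ onto $M$. $M$ is topolinear if $\mathrm{Ist}(M)$ contains a subgroup of cardinality $|M|$ acting transitively on $M$. *)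

theory Defs
  imports "HOL-Combinatorics.Permutations"
begin

text \<open>Alphabet: a finite set Q (of size q = card Q) containing the element 0 of a type with zero.
 Words of length n: extensional functions on {0..<n} with values in Q.\<close>

definition hspace :: "'a set \<Rightarrow> nat \<Rightarrow> (nat \<Rightarrow> 'a) set" where
  "hspace Q n = PiE {0..<n} (\<lambda>_. Q)"

definition hdist :: "nat \<Rightarrow> (nat \<Rightarrow> 'a) \<Rightarrow> (nat \<Rightarrow> 'a) \<Rightarrow> nat" where
  "hdist n x y = card {i. i < n \<and> x i \<noteq> y i}"

definition zero_word :: "nat \<Rightarrow> (nat \<Rightarrow> 'a::zero)" where
  "zero_word n = (\<lambda>i. if i < n then 0 else undefined)"

definition MDS_code :: "'a set \<Rightarrow> nat \<Rightarrow> (nat \<Rightarrow> 'a) set \<Rightarrow> bool" where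
  "MDS_code Q n M \<longleftrightarrow> M \<subseteq> hspace Q n \<and> card M = card Q ^ (n - 1) \<and>
     (\<forall>x\<in>M. \<forall>y\<in>M. x \<noteq> y \<longrightarrow> hdist n x y \<ge> 2)"

text \<open>An isotopism is a tuple of permutations of Q, represented as nat => 'a => 'a with
 the identity in coordinates >= n (canonical representation).\<close>

definition isotopism :: "'a set \<Rightarrow> nat \<Rightarrow> (nat \<Rightarrow> 'a \<Rightarrow> 'a) \<Rightarrow> bool" where
  "isotopism Q n t \<longleftrightarrow> (\<forall>i<n. t i permutes Q) \<and> (\<forall>i\<ge>n. t i = id)"

definition ist_apply :: "(nat \<Rightarrow> 'a \<Rightarrow> 'a) \<Rightarrow> (nat \<Rightarrow> 'a) \<Rightarrow> (nat \<Rightarrow> 'a)" where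
  "ist_apply t x = (\<lambda>i. t i (x i))"

definition ist_comp :: "(nat \<Rightarrow> 'a \<Rightarrow> 'a) \<Rightarrow> (nat \<Rightarrow> 'a \<Rightarrow> 'a) \<Rightarrow> (nat \<Rightarrow> 'a \<Rightarrow> 'a)" where
  "ist_comp t p = (\<lambda>i. t i \<circ> p i)"

definition ist_inv :: "(nat \<Rightarrow> 'a \<Rightarrow> 'a) \<Rightarrow> (nat \<Rightarrow> 'a \<Rightarrow> 'a)" where
  "ist_inv t = (\<lambda>i. inv (t i))"

definition ist_id :: "nat \<Rightarrow> 'a \<Rightarrow> 'a" where
  "ist_id = (\<lambda>i. id)"

definition Ist :: "'a set \<Rightarrow> nat \<Rightarrow> (nat \<Rightarrow> 'a) set \<Rightarrow> (nat \<Rightarrow> 'a \<Rightarrow> 'a) set" where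
  "Ist Q n M = {t. isotopism Q n t \<and> ist_apply t ` M = M}"

definition ist_subgroup :: "'a set \<Rightarrow> nat \<Rightarrow> (nat \<Rightarrow> 'a) set \<Rightarrow> (nat \<Rightarrow> 'a \<Rightarrow> 'a) set \<Rightarrow> bool" where
  "ist_subgroup Q n M G \<longleftrightarrow> G \<subseteq> Ist Q n M \<and> ist_id \<in> G \<and>
     (\<forall>t\<in>G. \<forall>p\<in>G. ist_comp t p \<in> G) \<and> (\<forall>t\<in>G. ist_inv t \<in> G)"

definition acts_transitively :: "(nat \<Rightarrow> 'a \<Rightarrow> 'a) set \<Rightarrow> (nat \<Rightarrow> 'a) set \<Rightarrow> bool" where
  "acts_transitively G M \<longleftrightarrow> (\<forall>x\<in>M. \<forall>y\<in>M. \<exists>g\<in>G. ist_apply g x = y)"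

definition acts_regularly :: "(nat \<Rightarrow> 'a \<Rightarrow> 'a) set \<Rightarrow> (nat \<Rightarrow> 'a) set \<Rightarrow> bool" where
  "acts_regularly G M \<longleftrightarrow> (\<forall>x\<in>M. \<forall>y\<in>M. \<exists>!g. g \<in> G \<and> ist_apply g x = y)"

definition topolinear :: "'a set \<Rightarrow> nat \<Rightarrow> (nat \<Rightarrow> 'a) set \<Rightarrow> bool" where
  "topolinear Q n M \<longleftrightarrow> (\<exists>H. ist_subgroup Q n M H \<and> card H = card M \<and> acts_transitively H M)"

end

theory Submission
  imports Defs
begin

lemma mds_eq:
  assumes "MDS_code Q n M" "x \<in> M" "y \<in> M" "{j. j < n \<and> x j \<noteq> y j} \<subseteq> {i}"
  shows "x = y"
proof (rule ccontr)
  assume "x \<noteq> y"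
  then have "hdist n x y \<ge> 2" using assms(1-3) unfolding MDS_code_def by blast
  moreover have "card {j. j < n \<and> x j \<noteq> y j} \<le> 1"
    using card_mono[OF _ assms(4)] by simp
  ultimately show False unfolding hdist_def by simp
qed

lemma mds_surj:
  assumes "MDS_code Q n M" "finite Q" "w \<in> PiE {1..<n} (\<lambda>_. Q)"
  shows "\<exists>x\<in>M. restrict x {1..<n} = w"
proof -
  let ?f = "\<lambda>x. restrict x {1..<n}"
  have inj: "inj_on ?f M"
  proof (rule inj_onI)
    fix x y assume xy: "x \<in> M" "y \<in> M" "?f x = ?f y"
    have "{j. j < n \<and> x j \<noteq> y j} \<subseteq> {0}"
    proof
      fix j assume "j \<in> {j. j < n \<and> x j \<noteq> y j}"
      then have "j < n" "x j \<noteq> y j" by auto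
      moreover have "j \<noteq> 0 \<Longrightarrow> x j = y j"
        using xy(3) \<open>j < n\<close> by (metis atLeastLessThan_iff less_one not_less restrict_apply')
      ultimately show "j \<in> {0}" by auto
    qed
    then show "x = y" using mds_eq[OF assms(1) xy(1,2)] by blast
  qed
  have sub: "?f ` M \<subseteq> PiE {1..<n} (\<lambda>_. Q)"
  proof
    fix z assume "z \<in> ?f ` M"
    then obtain x where x: "x \<in> M" "z = ?f x" by auto
    then have "x \<in> PiE {0..<n} (\<lambda>_. Q)" using assms(1) unfolding MDS_code_def hspace_def by auto
    then show "z \<in> PiE {1..<n} (\<lambda>_. Q)" using x(2) by (auto simp: PiE_iff)
  qed
  have fin: "finite (PiE {1..<n} (\<lambda>_. Q))" using assms(2) by (simp add: finite_PiE)
  have "card (PiE {1..<n} (\<lambda>_. Q)) = card Q ^ (n - 1)" by (simp add: card_PiE)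
  also have "\<dots> = card (?f ` M)" using assms(1) card_image[OF inj] unfolding MDS_code_def by simp
  finally have "?f ` M = PiE {1..<n} (\<lambda>_. Q)" using card_subset_eq[OF fin sub] by simp
  then have "w \<in> ?f ` M" using assms(3) by simp
  then obtain x where "x \<in> M" "w = ?f x" by (rule imageE)
  then show ?thesis by blast
qed

lemma iso_bij: "isotopism Q n t \<Longrightarrow> bij (t i)"
  unfolding isotopism_def by (cases "i < n") (auto dest: permutes_bij)

lemma stab:
  fixes Q :: "'a::zero set"
  assumes "finite Q" and "MDS_code Q n M" and "0 \<in> Q"
    and "ist_subgroup Q n M G"
    and hyp: "\<forall>t\<in>G. \<forall>p\<in>G. ist_apply t (zero_word n) = ist_apply p (zero_word n) \<longrightarrow> t 0 = p 0"
    and s: "s \<in> G" "ist_apply s (zero_word n) = zero_word n"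
  shows "s = ist_id"
proof -
  have sub: "G \<subseteq> Ist Q n M" and idG: "ist_id \<in> G" using assms(4) unfolding ist_subgroup_def by simp_all
  have sI: "s \<in> Ist Q n M" using sub s(1) by (rule subsetD)
  then have iso: "isotopism Q n s" and sM: "ist_apply s ` M = M" unfolding Ist_def by auto
  have idz: "ist_apply ist_id (zero_word n) = zero_word n" unfolding ist_apply_def ist_id_def by simp
  have "ist_apply s (zero_word n) = ist_apply ist_id (zero_word n)" by (simp only: s(2) idz)
  then have "s 0 = ist_id 0" using hyp s(1) idG by blast
  then have s0: "s 0 = id" by (simp add: ist_id_def)
  have sz: "s j 0 = 0" if "j < n" for j
    using fun_cong[OF s(2), of j] that by (simp add: ist_apply_def zero_word_def)
  show ?thesis
  proof (rule ext)
    fix i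
    show "s i = ist_id i"
    proof (cases "i < n")
      case False then show ?thesis using iso unfolding isotopism_def ist_id_def by simp
    next
      case True
      show ?thesis
      proof (cases "i = 0")
        case True then show ?thesis using s0 by (simp add: ist_id_def)
      next
        case i0: False
        show ?thesis
        proof (rule ext)
          fix a
          show "s i a = ist_id i a"
          proof (cases "a \<in> Q")
            case False
            have "s i permutes Q" using iso True unfolding isotopism_def by blast
            then show ?thesis using False unfolding ist_id_def by (simp add: permutes_not_in)
          next
            case aQ: True
            let ?w = "\<lambda>j. if j \<in> {1..<n} then (if j = i then a else 0) else undefined"
            have "?w \<in> PiE {1..<n} (\<lambda>_. Q)" using aQ \<open>0 \<in> Q\<close> by (auto simp: PiE_iff extensional_def)
            then obtain x where x: "x \<in> M" "restrict x {1..<n} = ?w"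
              using mds_surj[OF assms(2,1)] by blast
            have xj: "x j = (if j = i then a else 0)" if "1 \<le> j" "j < n" for j
              using fun_cong[OF x(2), of j] that by simp
            let ?y = "ist_apply s x"
            have yM: "?y \<in> M" using sM x(1) by blast
            have "{j. j < n \<and> x j \<noteq> ?y j} \<subseteq> {i}"
            proof
              fix j assume j: "j \<in> {j. j < n \<and> x j \<noteq> ?y j}"
              show "j \<in> {i}"
              proof (rule ccontr)
                assume "j \<notin> {i}"
                then have jn: "j \<noteq> i" and jl: "j < n" using j by auto
                have "x j = s j (x j)"
                proof (cases "j = 0")
                  case True then show ?thesis using s0 by simp
                next
                  case False
                  then have "x j = 0" using xj[of j] jn jl by simp
                  then show ?thesis using sz[OF jl] by simp
                qed
                then have "x j = ?y j" by (simp add: ist_apply_def)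
                then show False using j by simp
              qed
            qed
            then have "x = ?y" using mds_eq[OF assms(2) x(1) yM] by blast
            have "?y i = s i (x i)" by (simp add: ist_apply_def)
            with fun_cong[OF \<open>x = ?y\<close>, of i] have "x i = s i (x i)" by (rule trans)
            then show ?thesis using xj[of i] True i0 by (simp add: ist_id_def)
          qed
        qed
      qed
    qed
  qed
qed

lemma inv_cancel:
  assumes "bij a" "bij b" "inv a \<circ> (inv b \<circ> (c \<circ> a)) = id"
  shows "c = b"
proof (rule ext)
  fix z
  obtain w where w: "z = a w" using assms(1) by (metis bij_pointE)
  have "inv a (inv b (c (a w))) = w" using fun_cong[OF assms(3), of w] by simp
  then have "inv b (c (a w)) = a w" using assms(1) by (metis bij_inv_eq_iff)
  then have "c (a w) = b (a w)" using assms(2) by (metis bij_inv_eq_iff)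
  then show "c z = b z" using w by simp
qed

theorem proposition7:
  fixes Q :: "'a::zero set" and n :: nat and M :: "(nat \<Rightarrow> 'a) set"
    and G :: "(nat \<Rightarrow> 'a \<Rightarrow> 'a) set"
  assumes "finite Q" and "0 \<in> Q" and "n \<ge> 2"
    and "MDS_code Q n M" and "zero_word n \<in> M"
    and "ist_subgroup Q n M G" and "acts_transitively G M"
    and "\<forall>t\<in>G. \<forall>p\<in>G. ist_apply t (zero_word n) = ist_apply p (zero_word n) \<longrightarrow> t 0 = p 0"
  shows "acts_regularly G M \<and> card G = card M \<and> topolinear Q n M"
proof -
  note sg = assms(6)[unfolded ist_subgroup_def]
  have isoG: "isotopism Q n g" and gM: "ist_apply g ` M = M" if "g \<in> G" for g
  proof -
    have "g \<in> Ist Q n M" using sg that by blast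
    then show "isotopism Q n g" "ist_apply g ` M = M" unfolding Ist_def by simp_all
  qed
  have uniq: "g = h" if g: "g \<in> G" and h: "h \<in> G" and x: "x \<in> M"
    and eq: "ist_apply g x = ist_apply h x" for g h x
  proof -
    obtain k where k: "k \<in> G" "ist_apply k (zero_word n) = x"
      using assms(5,7) x unfolding acts_transitively_def by blast
    let ?u = "ist_comp (ist_inv k) (ist_comp (ist_inv h) (ist_comp g k))"
    have uG: "?u \<in> G" using sg g h k by simp
    have bk: "bij (k i)" and bh: "bij (h i)" and bg: "bij (g i)" for i
      using iso_bij isoG g h k by blast+
    have "ist_apply ?u (zero_word n) = zero_word n"
    proof (rule ext)
      fix i
      have "k i (zero_word n i) = x i" using fun_cong[OF k(2), of i] by (simp add: ist_apply_def)
      moreover have "g i (x i) = h i (x i)" using fun_cong[OF eq, of i] by (simp add: ist_apply_def)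
      moreover have "inv (h i) (h i (x i)) = x i" using bh[of i] by (simp add: bij_is_inj)
      moreover have "inv (k i) (k i (zero_word n i)) = zero_word n i" using bk[of i] by (simp add: bij_is_inj)
      ultimately show "ist_apply ?u (zero_word n) i = zero_word n i"
        by (simp add: ist_apply_def ist_comp_def ist_inv_def)
    qed
    then have ui: "?u = ist_id" by (rule stab[OF assms(1,4,2,6,8) uG])
    have cq: "inv (k i) \<circ> (inv (h i) \<circ> (g i \<circ> k i)) = id" for i
    proof -
      have "?u i = ist_id i" using ui by (rule fun_cong)
      then show "inv (k i) \<circ> (inv (h i) \<circ> (g i \<circ> k i)) = id"
        by (simp only: ist_comp_def ist_inv_def ist_id_def)
    qed
    show "g = h"
    proof (rule ext)
      fix i show "g i = h i" by (rule inv_cancel[OF bk bh cq])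
    qed
  qed
  have reg: "acts_regularly G M"
    unfolding acts_regularly_def
  proof (intro ballI)
    fix x y assume xy: "x \<in> M" "y \<in> M"
    obtain g where g: "g \<in> G" "ist_apply g x = y"
      using assms(7) xy unfolding acts_transitively_def by blast
    show "\<exists>!g. g \<in> G \<and> ist_apply g x = y"
    proof (rule ex1I[of _ g])
      show "g \<in> G \<and> ist_apply g x = y" using g by blast
      fix h assume "h \<in> G \<and> ist_apply h x = y"
      then have h: "h \<in> G" "ist_apply h x = ist_apply g x" using g(2) by simp_all
      show "h = g" by (rule uniq[OF h(1) g(1) xy(1) h(2)])
    qed
  qed
  have "bij_betw (\<lambda>g. ist_apply g (zero_word n)) G M"
    unfolding bij_betw_def
  proof
    show "inj_on (\<lambda>g. ist_apply g (zero_word n)) G"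
    proof (rule inj_onI)
      fix g h assume "g \<in> G" "h \<in> G" "ist_apply g (zero_word n) = ist_apply h (zero_word n)"
      then show "g = h" by (rule uniq[OF _ _ assms(5)])
    qed
    show "(\<lambda>g. ist_apply g (zero_word n)) ` G = M"
    proof
      show "(\<lambda>g. ist_apply g (zero_word n)) ` G \<subseteq> M" using gM assms(5) by blast
      show "M \<subseteq> (\<lambda>g. ist_apply g (zero_word n)) ` G"
      proof
        fix y assume "y \<in> M"
        then obtain g where "g \<in> G" "ist_apply g (zero_word n) = y"
          using assms(5,7) unfolding acts_transitively_def by blast
        then show "y \<in> (\<lambda>g. ist_apply g (zero_word n)) ` G" by blast
      qed
    qed
  qed
  then have c: "card G = card M" by (rule bij_betw_same_card)
  have "topolinear Q n M" unfolding topolinear_def using assms(6,7) c by blast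
  with reg c show ?thesis by simp
qed

end
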